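(* Let $X_1,X_2,X_3,X_4$ be random vectors in a sublinear expectation space. The following are equivalent: (1) $X_1\dashrightarrow X_2\dashrightarrow X_3\dashrightarrow X_4$; (2) $(X_1,X_2)\dashrightarrow(X_3,X_4)$, $X_1\dashrightarrow X_2$ and $X_3\dashrightarrow X_4$.
   Context: Sublinear expectation space $(\Omega,\mathcal H,\hat{\mathbb E})$: $\hat{\mathbb E}$ is monotone, constant-preserving, sub-additive and positively homogeneous (in the paper $\hat{\mathbb E}[X]=\sup_{Q\in\mathcal P}E_Q[X]$). For random vectors $X,Y$, $X\dashrightarrow Y$ means $\hat{\mathbb E}[\varphi(X,Y)]=\hat{\mathbb E}[\hat{\mathbb E}[\varphi(x,Y)]_{x=X}]$ for all bounded Lipschitz $\varphi$; $X_1\dashrightarrow\cdots\dashrightarrow X_n$ means $(X_1,\dots,X_i)\dashrightarrow X_{i+1}$ for $i=1,\dots,n-1$. *)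

theory Defs
  imports "HOL-Analysis.Analysis"
begin

definition bounded_lip :: "('a::metric_space \<Rightarrow> real) \<Rightarrow> bool" where
  "bounded_lip \<phi> \<longleftrightarrow> bounded (range \<phi>) \<and> (\<exists>C. C-lipschitz_on UNIV \<phi>)"

text \<open>Sublinear expectation space (\<Omega>, H, E): H is a linear space of real functions on \<Omega>
  containing the constants and closed under composition with bounded Lipschitz functions
  phi : R^n -> R (for every n; R^n encoded by the first n coordinates of nat => real,
  with the l1 distance), and E : H -> R is monotone, constant preserving, sub-additive
  and positively homogeneous.\<close>
definition sublinear_expectation_space ::
  "('w \<Rightarrow> real) set \<Rightarrow> (('w \<Rightarrow> real) \<Rightarrow> real) \<Rightarrow> bool" where
  "sublinear_expectation_space H E \<longleftrightarrow>
     (\<forall>c. (\<lambda>_. c) \<in> H) \<and>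
     (\<forall>X\<in>H. \<forall>Y\<in>H. (\<lambda>\<omega>. X \<omega> + Y \<omega>) \<in> H) \<and>
     (\<forall>X\<in>H. \<forall>c. (\<lambda>\<omega>. c * X \<omega>) \<in> H) \<and>
     (\<forall>(n::nat) (Xs :: nat \<Rightarrow> 'w \<Rightarrow> real) (\<phi> :: (nat \<Rightarrow> real) \<Rightarrow> real).
        (\<forall>i<n. Xs i \<in> H) \<and> (\<exists>M. \<forall>x. \<bar>\<phi> x\<bar> \<le> M) \<and>
        (\<exists>L. \<forall>x y. \<bar>\<phi> x - \<phi> y\<bar> \<le> L * (\<Sum>i<n. \<bar>x i - y i\<bar>))
        \<longrightarrow> (\<lambda>\<omega>. \<phi> (\<lambda>i. Xs i \<omega>)) \<in> H) \<and>
     (\<forall>X\<in>H. \<forall>Y\<in>H. (\<forall>\<omega>. X \<omega> \<le> Y \<omega>) \<longrightarrow> E X \<le> E Y) \<and>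
     (\<forall>c. E (\<lambda>_. c) = c) \<and>
     (\<forall>X\<in>H. \<forall>Y\<in>H. E (\<lambda>\<omega>. X \<omega> + Y \<omega>) \<le> E X + E Y) \<and>
     (\<forall>X\<in>H. \<forall>c\<ge>0. E (\<lambda>\<omega>. c * X \<omega>) = c * E X)"

definition random_vector :: "('w \<Rightarrow> real) set \<Rightarrow> ('w \<Rightarrow> 'a::euclidean_space) \<Rightarrow> bool" where
  "random_vector H X \<longleftrightarrow> (\<forall>b\<in>Basis. (\<lambda>\<omega>. X \<omega> \<bullet> b) \<in> H)"

definition sl_indep ::
  "(('w \<Rightarrow> real) \<Rightarrow> real) \<Rightarrow> ('w \<Rightarrow> 'a::euclidean_space) \<Rightarrow> ('w \<Rightarrow> 'b::euclidean_space) \<Rightarrow> bool" where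
  "sl_indep E X Y \<longleftrightarrow>
     (\<forall>\<phi> :: 'a \<times> 'b \<Rightarrow> real. bounded_lip \<phi> \<longrightarrow>
        E (\<lambda>\<omega>. \<phi> (X \<omega>, Y \<omega>)) = E (\<lambda>\<omega>. E (\<lambda>\<omega>'. \<phi> (X \<omega>, Y \<omega>'))))"

end

theory Submission
  imports Defs
begin

lemma bl_comp:
  assumes "bounded_lip \<phi>" "\<And>a b. dist (f a) (f b) \<le> dist a b"
  shows "bounded_lip (\<lambda>x. \<phi> (f x))"
proof -
  obtain C where C: "C-lipschitz_on UNIV \<phi>" using assms(1) unfolding bounded_lip_def by blast
  have "range (\<lambda>x. \<phi> (f x)) \<subseteq> range \<phi>" by auto
  hence "bounded (range (\<lambda>x. \<phi> (f x)))"
    using assms(1) bounded_subset unfolding bounded_lip_def by blast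
  moreover have "C-lipschitz_on UNIV (\<lambda>x. \<phi> (f x))"
  proof (rule lipschitz_onI)
    show "0 \<le> C" using lipschitz_on_nonneg[OF C] .
    fix x y
    have "dist (\<phi> (f x)) (\<phi> (f y)) \<le> C * dist (f x) (f y)" using lipschitz_onD[OF C] by blast
    also have "\<dots> \<le> C * dist x y" using assms(2) lipschitz_on_nonneg[OF C] by (simp add: mult_left_mono)
    finally show "dist (\<phi> (f x)) (\<phi> (f y)) \<le> C * dist x y" .
  qed
  ultimately show ?thesis unfolding bounded_lip_def by blast
qed

lemma d1: "dist (x3::'c::metric_space, x4::'d::metric_space) (y3, y4) \<le> dist ((p::'b::metric_space, x3), x4) ((q, y3), y4)"
  by (simp add: dist_Pair_Pair real_sqrt_le_mono)
lemma d2: "dist (p::'b::metric_space, (x3::'c::metric_space, x4::'d::metric_space)) (q, (y3, y4)) \<le> dist ((p, x3), x4) ((q, y3), y4)"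
  by (simp add: dist_Pair_Pair)
lemma d3: "dist ((p::'b::metric_space, x3::'c::metric_space), x4::'d::metric_space) ((q, y3), y4) \<le> dist (p, (x3, x4)) (q, (y3, y4))"
  by (simp add: dist_Pair_Pair)
lemma d4: "dist (p::'b::metric_space, (x3::'c::metric_space, x4::'d::metric_space)) (p, (y3, y4)) \<le> dist (x3, x4) (y3, y4)"
  by (simp add: dist_Pair_Pair)
lemma d5: "dist ((p::'b::metric_space, x3::'c::metric_space), x4::'d::metric_space) ((p, y3), y4) \<le> dist (x3, x4) (y3, y4)"
  by (simp add: dist_Pair_Pair)
lemma d6: "dist (p::'b::metric_space, x3::'c::metric_space) (q, y3) \<le> dist (p, (x3, x4::'d::metric_space)) (q, (y3, y4))"
  by (simp add: dist_Pair_Pair real_sqrt_le_mono)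

lemma key:
  fixes Y :: "'w \<Rightarrow> 'b::euclidean_space" and \<phi> :: "'a::metric_space \<times> 'b \<Rightarrow> real"
  assumes S: "sublinear_expectation_space H E" and Y: "random_vector H Y" and bl: "bounded_lip \<phi>"
  shows "bounded_lip (\<lambda>x. E (\<lambda>\<omega>. \<phi> (x, Y \<omega>)))"
proof -
  obtain C where C: "C-lipschitz_on UNIV \<phi>" using bl unfolding bounded_lip_def by blast
  have C0: "0 \<le> C" using lipschitz_on_nonneg[OF C] .
  obtain M where M: "\<And>z. \<bar>\<phi> z\<bar> \<le> M" using bl unfolding bounded_lip_def bounded_iff by auto
  have const: "\<And>c. (\<lambda>_. c) \<in> H" and add: "\<And>X Y. X \<in> H \<Longrightarrow> Y \<in> H \<Longrightarrow> (\<lambda>\<omega>. X \<omega> + Y \<omega>) \<in> H"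
    and comp: "\<And>(n::nat) (Xs :: nat \<Rightarrow> 'w \<Rightarrow> real) (\<phi> :: (nat \<Rightarrow> real) \<Rightarrow> real).
        (\<forall>i<n. Xs i \<in> H) \<Longrightarrow> (\<exists>M. \<forall>x. \<bar>\<phi> x\<bar> \<le> M) \<Longrightarrow>
        (\<exists>L. \<forall>x y. \<bar>\<phi> x - \<phi> y\<bar> \<le> L * (\<Sum>i<n. \<bar>x i - y i\<bar>))
        \<Longrightarrow> (\<lambda>\<omega>. \<phi> (\<lambda>i. Xs i \<omega>)) \<in> H"
    and mono: "\<And>X Y. X\<in>H \<Longrightarrow> Y\<in>H \<Longrightarrow> (\<forall>\<omega>. X \<omega> \<le> Y \<omega>) \<Longrightarrow> E X \<le> E Y"
    and Ec: "\<And>c. E (\<lambda>_. c) = c"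
    and sub: "\<And>X Y. X\<in>H \<Longrightarrow> Y\<in>H \<Longrightarrow> E (\<lambda>\<omega>. X \<omega> + Y \<omega>) \<le> E X + E Y"
    using S unfolding sublinear_expectation_space_def by blast+
  obtain bl where bl: "set bl = (Basis :: 'b set)" "distinct bl" using finite_distinct_list[OF finite_Basis] by blast
  define n where "n = length bl"
  have inH: "(\<lambda>\<omega>. \<phi> (x, Y \<omega>)) \<in> H" for x
  proof -
    define Xs where "Xs = (\<lambda>i \<omega>. Y \<omega> \<bullet> bl ! i)"
    define \<psi> where "\<psi> = (\<lambda>v :: nat \<Rightarrow> real. \<phi> (x, \<Sum>i<n. v i *\<^sub>R bl ! i))"
    have rep: "(\<Sum>i<n. (y \<bullet> bl ! i) *\<^sub>R bl ! i) = y" for y :: 'b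
    proof -
      have "(\<Sum>i<n. (y \<bullet> bl ! i) *\<^sub>R bl ! i) = sum_list (map (\<lambda>b. (y \<bullet> b) *\<^sub>R b) bl)"
        by (simp add: sum_list_sum_nth n_def lessThan_atLeast0)
      also have "\<dots> = (\<Sum>b\<in>Basis. (y \<bullet> b) *\<^sub>R b)"
        using bl by (simp add: sum_list_distinct_conv_sum_set)
      also have "\<dots> = y" by (rule euclidean_representation)
      finally show ?thesis .
    qed
    have "(\<lambda>\<omega>. \<psi> (\<lambda>i. Xs i \<omega>)) \<in> H"
    proof (rule comp[of n Xs \<psi>])
      show "\<forall>i<n. Xs i \<in> H" using Y bl unfolding random_vector_def Xs_def n_def by auto
      show "\<exists>M. \<forall>x. \<bar>\<psi> x\<bar> \<le> M" using M unfolding \<psi>_def by blast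
      show "\<exists>L. \<forall>v w. \<bar>\<psi> v - \<psi> w\<bar> \<le> L * (\<Sum>i<n. \<bar>v i - w i\<bar>)"
      proof (intro exI allI)
        fix v w :: "nat \<Rightarrow> real"
        have D: "dist (x, \<Sum>i<n. v i *\<^sub>R bl ! i) (x, \<Sum>i<n. w i *\<^sub>R bl ! i)
             \<le> (\<Sum>i<n. \<bar>v i - w i\<bar>)"
        proof -
          have "dist (x, \<Sum>i<n. v i *\<^sub>R bl ! i) (x, \<Sum>i<n. w i *\<^sub>R bl ! i)
             = norm (\<Sum>i<n. (v i - w i) *\<^sub>R bl ! i)"
            by (simp add: dist_Pair_Pair dist_norm sum_subtractf scaleR_diff_left)
          also have "\<dots> \<le> (\<Sum>i<n. norm ((v i - w i) *\<^sub>R bl ! i))" by (rule norm_sum)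
          also have "\<dots> = (\<Sum>i<n. \<bar>v i - w i\<bar>)"
          proof (rule sum.cong[OF refl])
            fix i assume "i \<in> {..<n}"
            hence "bl ! i \<in> Basis" using bl(1) nth_mem[of i bl] by (simp add: n_def)
            thus "norm ((v i - w i) *\<^sub>R bl ! i) = \<bar>v i - w i\<bar>" by (simp add: norm_Basis)
          qed
          finally show ?thesis .
        qed
        have "\<bar>\<psi> v - \<psi> w\<bar> = dist (\<psi> v) (\<psi> w)" by (simp add: dist_real_def)
        also have "\<dots> \<le> C * dist (x, \<Sum>i<n. v i *\<^sub>R bl ! i) (x, \<Sum>i<n. w i *\<^sub>R bl ! i)"
          unfolding \<psi>_def using lipschitz_onD[OF C] by blast
        also have "\<dots> \<le> C * (\<Sum>i<n. \<bar>v i - w i\<bar>)"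
          using D C0 by (rule mult_left_mono)
        finally show "\<bar>\<psi> v - \<psi> w\<bar> \<le> C * (\<Sum>i<n. \<bar>v i - w i\<bar>)" .
      qed
    qed
    moreover have "(\<lambda>\<omega>. \<psi> (\<lambda>i. Xs i \<omega>)) = (\<lambda>\<omega>. \<phi> (x, Y \<omega>))"
      unfolding \<psi>_def Xs_def using rep by simp
    ultimately show ?thesis by simp
  qed
  have one: "E (\<lambda>\<omega>. \<phi> (x, Y \<omega>)) \<le> E (\<lambda>\<omega>. \<phi> (x', Y \<omega>)) + C * dist x x'" for x x'
  proof -
    have "E (\<lambda>\<omega>. \<phi> (x, Y \<omega>)) \<le> E (\<lambda>\<omega>. \<phi> (x', Y \<omega>) + C * dist x x')"
    proof (rule mono)
      show "(\<lambda>\<omega>. \<phi> (x', Y \<omega>) + C * dist x x') \<in> H" using add[OF inH const] .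
      show "\<forall>\<omega>. \<phi> (x, Y \<omega>) \<le> \<phi> (x', Y \<omega>) + C * dist x x'"
      proof
        fix \<omega>
        have "dist (\<phi> (x, Y \<omega>)) (\<phi> (x', Y \<omega>)) \<le> C * dist (x, Y \<omega>) (x', Y \<omega>)"
          using lipschitz_onD[OF C] by blast
        thus "\<phi> (x, Y \<omega>) \<le> \<phi> (x', Y \<omega>) + C * dist x x'"
          by (simp add: dist_Pair_Pair dist_real_def)
      qed
    qed (rule inH)
    also have "\<dots> \<le> E (\<lambda>\<omega>. \<phi> (x', Y \<omega>)) + E (\<lambda>_. C * dist x x')"
      using sub[OF inH const] .
    finally show ?thesis using Ec by simp
  qed
  have "C-lipschitz_on UNIV (\<lambda>x. E (\<lambda>\<omega>. \<phi> (x, Y \<omega>)))"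
  proof (rule lipschitz_onI[OF _ C0])
    fix x y
    show "dist (E (\<lambda>\<omega>. \<phi> (x, Y \<omega>))) (E (\<lambda>\<omega>. \<phi> (y, Y \<omega>))) \<le> C * dist x y"
      using one[of x y] one[of y x] by (simp add: dist_real_def dist_commute abs_le_iff)
  qed
  moreover have "bounded (range (\<lambda>x. E (\<lambda>\<omega>. \<phi> (x, Y \<omega>))))"
    unfolding bounded_iff
  proof (intro exI ballI)
    fix r assume "r \<in> range (\<lambda>x. E (\<lambda>\<omega>. \<phi> (x, Y \<omega>)))"
    then obtain x where r: "r = E (\<lambda>\<omega>. \<phi> (x, Y \<omega>))" by auto
    have "E (\<lambda>\<omega>. \<phi> (x, Y \<omega>)) \<le> E (\<lambda>_. M)"
      by (rule mono[OF inH const]) (use M in \<open>metis abs_le_D1 abs_le_D2 minus_le_iff\<close>)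
    moreover have "E (\<lambda>_. - M) \<le> E (\<lambda>\<omega>. \<phi> (x, Y \<omega>))"
      by (rule mono[OF const inH]) (use M in \<open>metis abs_le_D1 abs_le_D2 minus_le_iff\<close>)
    ultimately show "norm r \<le> M" using Ec r by auto
  qed
  ultimately show ?thesis unfolding bounded_lip_def by blast
qed


theorem mainTheorem19:
  fixes H :: "('w \<Rightarrow> real) set" and E :: "('w \<Rightarrow> real) \<Rightarrow> real"
    and X1 :: "'w \<Rightarrow> 'a::euclidean_space" and X2 :: "'w \<Rightarrow> 'b::euclidean_space"
    and X3 :: "'w \<Rightarrow> 'c::euclidean_space" and X4 :: "'w \<Rightarrow> 'd::euclidean_space"
  assumes "sublinear_expectation_space H E"
    and "random_vector H X1" and "random_vector H X2"
    and "random_vector H X3" and "random_vector H X4"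
  shows "(sl_indep E X1 X2 \<and>
          sl_indep E (\<lambda>\<omega>. (X1 \<omega>, X2 \<omega>)) X3 \<and>
          sl_indep E (\<lambda>\<omega>. ((X1 \<omega>, X2 \<omega>), X3 \<omega>)) X4)
     \<longleftrightarrow>
         (sl_indep E (\<lambda>\<omega>. (X1 \<omega>, X2 \<omega>)) (\<lambda>\<omega>. (X3 \<omega>, X4 \<omega>)) \<and>
          sl_indep E X1 X2 \<and> sl_indep E X3 X4)"
proof -
  note S = assms(1) and R4 = assms(5)
  define P where "P = (\<lambda>\<omega>. (X1 \<omega>, X2 \<omega>))"
  have Kb: "bounded_lip (\<lambda>q. E (\<lambda>\<omega>. \<phi> (q, X4 \<omega>)))" if "bounded_lip \<phi>" for \<phi> :: "(('a \<times> 'b) \<times> 'c) \<times> 'd \<Rightarrow> real"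
    using key[OF S R4 that] .
  have main: "(sl_indep E X1 X2 \<and> sl_indep E P X3 \<and> sl_indep E (\<lambda>\<omega>. (P \<omega>, X3 \<omega>)) X4) \<longleftrightarrow> (sl_indep E P (\<lambda>\<omega>. (X3 \<omega>, X4 \<omega>)) \<and> sl_indep E X1 X2 \<and> sl_indep E X3 X4)"
  proof
    assume A: "sl_indep E X1 X2 \<and> sl_indep E P X3 \<and> sl_indep E (\<lambda>\<omega>. (P \<omega>, X3 \<omega>)) X4"
    hence I12: "sl_indep E X1 X2" and I3: "sl_indep E P X3" and I4: "sl_indep E (\<lambda>\<omega>. (P \<omega>, X3 \<omega>)) X4"
      by auto
    have I34: "sl_indep E X3 X4" unfolding sl_indep_def
    proof (intro allI impI)
      fix \<phi> :: "'c \<times> 'd \<Rightarrow> real" assume bl: "bounded_lip \<phi>"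
      have "bounded_lip (\<lambda>z. \<phi> ((\<lambda>((p::'a\<times>'b, x3), x4). (x3, x4)) z))"
        by (rule bl_comp[OF bl]) (auto simp: d1)
      with I4 show "E (\<lambda>\<omega>. \<phi> (X3 \<omega>, X4 \<omega>)) = E (\<lambda>\<omega>. E (\<lambda>\<omega>'. \<phi> (X3 \<omega>, X4 \<omega>')))"
        unfolding sl_indep_def by (drule_tac x="\<lambda>z. \<phi> ((\<lambda>((p, x3), x4). (x3, x4)) z)" in spec) simp
    qed
    have IP: "sl_indep E P (\<lambda>\<omega>. (X3 \<omega>, X4 \<omega>))" unfolding sl_indep_def
    proof (intro allI impI)
      fix \<phi> :: "('a \<times> 'b) \<times> 'c \<times> 'd \<Rightarrow> real" assume bl: "bounded_lip \<phi>"
      define \<phi>' where "\<phi>' = (\<lambda>z. \<phi> ((\<lambda>((p, x3), x4::'d). (p, (x3, x4))) z))"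
      have bl': "bounded_lip \<phi>'" unfolding \<phi>'_def
        by (rule bl_comp[OF bl]) (auto simp: d2)
      define \<psi> where "\<psi> = (\<lambda>q. E (\<lambda>\<omega>. \<phi>' (q, X4 \<omega>)))"
      have bl\<psi>: "bounded_lip \<psi>" unfolding \<psi>_def by (rule Kb[OF bl'])
      have inner: "E (\<lambda>\<omega>'. \<psi> (p, X3 \<omega>')) = E (\<lambda>\<omega>'. \<phi> (p, (X3 \<omega>', X4 \<omega>')))" for p
      proof -
        have "bounded_lip (\<lambda>z. \<phi> ((\<lambda>(x3, x4). (p, (x3, x4))) z))"
          by (rule bl_comp[OF bl]) (auto simp: d4)
        with I34 have "E (\<lambda>\<omega>. \<phi> (p, (X3 \<omega>, X4 \<omega>))) = E (\<lambda>\<omega>. E (\<lambda>\<omega>'. \<phi> (p, (X3 \<omega>, X4 \<omega>'))))"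
          unfolding sl_indep_def by (drule_tac x="\<lambda>z. \<phi> ((\<lambda>(x3, x4). (p, (x3, x4))) z)" in spec) simp
        thus ?thesis unfolding \<psi>_def \<phi>'_def by simp
      qed
      have "E (\<lambda>\<omega>. \<phi> (P \<omega>, (X3 \<omega>, X4 \<omega>))) = E (\<lambda>\<omega>. \<phi>' ((P \<omega>, X3 \<omega>), X4 \<omega>))"
        unfolding \<phi>'_def by simp
      also have "\<dots> = E (\<lambda>\<omega>. E (\<lambda>\<omega>'. \<phi>' ((P \<omega>, X3 \<omega>), X4 \<omega>')))"
        using I4 bl' unfolding sl_indep_def by blast
      also have "\<dots> = E (\<lambda>\<omega>. \<psi> (P \<omega>, X3 \<omega>))" unfolding \<psi>_def ..
      also have "\<dots> = E (\<lambda>\<omega>. E (\<lambda>\<omega>'. \<psi> (P \<omega>, X3 \<omega>')))"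
        using I3 bl\<psi> unfolding sl_indep_def by blast
      also have "\<dots> = E (\<lambda>\<omega>. E (\<lambda>\<omega>'. \<phi> (P \<omega>, (X3 \<omega>', X4 \<omega>'))))"
        using inner by simp
      finally show "E (\<lambda>\<omega>. \<phi> (P \<omega>, X3 \<omega>, X4 \<omega>)) = E (\<lambda>\<omega>. E (\<lambda>\<omega>'. \<phi> (P \<omega>, X3 \<omega>', X4 \<omega>')))" .
    qed
    show "sl_indep E P (\<lambda>\<omega>. (X3 \<omega>, X4 \<omega>)) \<and> sl_indep E X1 X2 \<and> sl_indep E X3 X4"
      using IP I12 I34 by blast
  next
    assume A: "sl_indep E P (\<lambda>\<omega>. (X3 \<omega>, X4 \<omega>)) \<and> sl_indep E X1 X2 \<and> sl_indep E X3 X4"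
    hence IP: "sl_indep E P (\<lambda>\<omega>. (X3 \<omega>, X4 \<omega>))" and I12: "sl_indep E X1 X2" and I34: "sl_indep E X3 X4"
      by auto
    have I3: "sl_indep E P X3" unfolding sl_indep_def
    proof (intro allI impI)
      fix \<phi> :: "('a \<times> 'b) \<times> 'c \<Rightarrow> real" assume bl: "bounded_lip \<phi>"
      have "bounded_lip (\<lambda>z. \<phi> ((\<lambda>(p, (x3, x4::'d)). (p, x3)) z))"
        by (rule bl_comp[OF bl]) (auto simp: d6)
      with IP show "E (\<lambda>\<omega>. \<phi> (P \<omega>, X3 \<omega>)) = E (\<lambda>\<omega>. E (\<lambda>\<omega>'. \<phi> (P \<omega>, X3 \<omega>')))"
        unfolding sl_indep_def by (drule_tac x="\<lambda>z. \<phi> ((\<lambda>(p, (x3, x4::'d)). (p, x3)) z)" in spec) simp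
    qed
    have I4: "sl_indep E (\<lambda>\<omega>. (P \<omega>, X3 \<omega>)) X4" unfolding sl_indep_def
    proof (intro allI impI)
      fix \<phi> :: "(('a \<times> 'b) \<times> 'c) \<times> 'd \<Rightarrow> real" assume bl: "bounded_lip \<phi>"
      define \<phi>' where "\<phi>' = (\<lambda>z. \<phi> ((\<lambda>(p, (x3, x4)). ((p, x3), x4)) z))"
      have bl': "bounded_lip \<phi>'" unfolding \<phi>'_def
        by (rule bl_comp[OF bl]) (auto simp: d3)
      define \<psi> where "\<psi> = (\<lambda>q. E (\<lambda>\<omega>. \<phi> (q, X4 \<omega>)))"
      have bl\<psi>: "bounded_lip \<psi>" unfolding \<psi>_def by (rule Kb[OF bl])
      have inner: "E (\<lambda>\<omega>'. \<phi>' (p, (X3 \<omega>', X4 \<omega>'))) = E (\<lambda>\<omega>'. \<psi> (p, X3 \<omega>'))" for p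
      proof -
        have "bounded_lip (\<lambda>z. \<phi> ((\<lambda>(x3, x4). ((p, x3), x4)) z))"
          by (rule bl_comp[OF bl]) (auto simp: d5)
        with I34 have "E (\<lambda>\<omega>. \<phi> ((p, X3 \<omega>), X4 \<omega>)) = E (\<lambda>\<omega>. E (\<lambda>\<omega>'. \<phi> ((p, X3 \<omega>), X4 \<omega>')))"
          unfolding sl_indep_def by (drule_tac x="\<lambda>z. \<phi> ((\<lambda>(x3, x4). ((p, x3), x4)) z)" in spec) simp
        thus ?thesis unfolding \<psi>_def \<phi>'_def by simp
      qed
      have "E (\<lambda>\<omega>. \<phi> ((P \<omega>, X3 \<omega>), X4 \<omega>)) = E (\<lambda>\<omega>. \<phi>' (P \<omega>, (X3 \<omega>, X4 \<omega>)))"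
        unfolding \<phi>'_def by simp
      also have "\<dots> = E (\<lambda>\<omega>. E (\<lambda>\<omega>'. \<phi>' (P \<omega>, (X3 \<omega>', X4 \<omega>'))))"
        using IP bl' unfolding sl_indep_def by blast
      also have "\<dots> = E (\<lambda>\<omega>. E (\<lambda>\<omega>'. \<psi> (P \<omega>, X3 \<omega>')))"
        using inner by simp
      also have "\<dots> = E (\<lambda>\<omega>. \<psi> (P \<omega>, X3 \<omega>))"
        using I3 bl\<psi> unfolding sl_indep_def by (metis (no_types, lifting))
      also have "\<dots> = E (\<lambda>\<omega>. E (\<lambda>\<omega>'. \<phi> ((P \<omega>, X3 \<omega>), X4 \<omega>')))" unfolding \<psi>_def ..
      finally show "E (\<lambda>\<omega>. \<phi> ((P \<omega>, X3 \<omega>), X4 \<omega>)) = E (\<lambda>\<omega>. E (\<lambda>\<omega>'. \<phi> ((P \<omega>, X3 \<omega>), X4 \<omega>')))" .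
    qed
    show "sl_indep E X1 X2 \<and> sl_indep E P X3 \<and> sl_indep E (\<lambda>\<omega>. (P \<omega>, X3 \<omega>)) X4"
      using I12 I3 I4 by blast
  qed
  then show ?thesis by (simp add: P_def)
qed

end
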